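(* Let $F_0,F_1$ be an affine pair of communicating SR-machines, and for $j=0,1$ let $k_j=|K_j|$ be the number of states of $F_j$. If there is a reachable global state $((p_0,p_1),(x_\alpha,\lambda))$ with $|x_\alpha|\ge k_0(k_1-1)+1$, then $F_1$ has a receive cycle and $F_0$ has a send cycle.
   Context: A pair of communicating SR-machines is a CFSM protocol with communication graph having nodes $\{0,1\}$ and two edges $\alpha$ (from $0$ to $1$) and $\beta$ (from $1$ to $0$), disjoint finite message alphabets $M_\alpha,M_\beta$, and two finite state machines $F_j=(K_j,\Sigma_j,T_j,h_j)$, $j=0,1$, with $\Sigma_0=\{-b:b\in M_\alpha\}\cup\{+b:b\in M_\beta\}$, $\Sigma_1=\{-b:b\in M_\beta\}\cup\{+b:b\in M_\alpha\}$, $K_j$ finite, $h_j\in K_j$ initial, $T_j\subseteq K_j\times\Sigma_j\times K_j$ (transitions written $p\xrightarrow{e}q$; $+b$ = receive, $-b$ = send; $p\xrightarrow{w}q$ for $w\in\Sigma_j^*$ means a directed path labelled $w$). A state is a send state if it has no outgoing $+b$ transition and a receive state if it has no outgoing $-b$ transition. $F_j$ is an SR-machine if every state is a send or a receive state, its transition diagram is strongly connected, and $p\xrightarrow{e}q_1$, $p\xrightarrow{e}q_2$ imply $q_1=q_2$. Global states are $((p_0,p_1),(x_\alpha,x_\beta))$ with $p_j\in K_j$, $x_\alpha\in M_\alpha^*$, $x_\beta\in M_\beta^*$; initially $((h_0,h_1),(\lambda,\lambda))$. A step is either a send: a machine performs $p\xrightarrow{-b}q$ and $b$ is appended to the end of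 the channel on which it sends ($\alpha$ for $F_0$, $\beta$ for $F_1$), or a receive: a machine performs $p\xrightarrow{+b}q$ and $b$ is removed from the front of its input channel ($\beta$ for $F_0$, $\alpha$ for $F_1$), which must begin with $b$; the other machine's state is unchanged. Reachable means reachable from the initial global state by finitely many steps. For $w\in\Sigma_0^*\cup\Sigma_1^*$, $\pi_\alpha(w)\in M_\alpha^*$ (resp. $\pi_\beta(w)\in M_\beta^*$) is the string of message symbols from $M_\alpha$ (resp. $M_\beta$) occurring in $w$, in order, with signs removed. Let $\mathbf Z_j=\{(\pi_\alpha(w),\pi_\beta(w)): h_j\xrightarrow{w}h_j \text{ in } F_j\}$; the pair is affine if $\mathbf Z_0=\mathbf Z_1$. A send cycle (resp. receive cycle) of $F_j$ is a directed cycle in its transition diagram all of whose labels are of the form $-b$ (resp. $+b$). *)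

theory Defs
  imports Main
begin

text \<open>Events: Snd b is the label -b (send), Rcv b is the label +b (receive).\<close>
datatype 'm act = Snd 'm | Rcv 'm

fun msg :: "'m act \<Rightarrow> 'm" where
  "msg (Snd b) = b" | "msg (Rcv b) = b"

fun is_send :: "'m act \<Rightarrow> bool" where
  "is_send (Snd _) = True" | "is_send (Rcv _) = False"

fun is_recv :: "'m act \<Rightarrow> bool" where
  "is_recv (Snd _) = False" | "is_recv (Rcv _) = True"

definition alphabet :: "'m set \<Rightarrow> 'm set \<Rightarrow> 'm act set" where
  "alphabet Moutp Minp = Snd ` Moutp \<union> Rcv ` Minp"

inductive path :: "('s \<times> 'm act \<times> 's) set \<Rightarrow> 's \<Rightarrow> 'm act list \<Rightarrow> 's \<Rightarrow> bool"
  for T where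
  path_nil: "path T p [] p"
| path_cons: "(p, e, q) \<in> T \<Longrightarrow> path T q w r \<Longrightarrow> path T p (e # w) r"

definition send_state :: "('s \<times> 'm act \<times> 's) set \<Rightarrow> 's \<Rightarrow> bool" where
  "send_state T p \<longleftrightarrow> (\<forall>b q. (p, Rcv b, q) \<notin> T)"

definition receive_state :: "('s \<times> 'm act \<times> 's) set \<Rightarrow> 's \<Rightarrow> bool" where
  "receive_state T p \<longleftrightarrow> (\<forall>b q. (p, Snd b, q) \<notin> T)"

definition sr_machine ::
  "'m set \<Rightarrow> 'm set \<Rightarrow> 's set \<Rightarrow> ('s \<times> 'm act \<times> 's) set \<Rightarrow> 's \<Rightarrow> bool" where
  "sr_machine Moutp Minp K T h \<longleftrightarrow>
     finite K \<and> h \<in> K \<and> T \<subseteq> K \<times> alphabet Moutp Minp \<times> K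
     \<and> (\<forall>p\<in>K. send_state T p \<or> receive_state T p)
     \<and> (\<forall>p\<in>K. \<forall>q\<in>K. \<exists>w. path T p w q)
     \<and> (\<forall>p e q1 q2. (p, e, q1) \<in> T \<longrightarrow> (p, e, q2) \<in> T \<longrightarrow> q1 = q2)"

text \<open>Pair of communicating SR-machines: F0 sends on alpha (messages M_alpha) and receives on beta.\<close>
definition sr_pair ::
  "'m set \<Rightarrow> 'm set \<Rightarrow> 's0 set \<Rightarrow> ('s0 \<times> 'm act \<times> 's0) set \<Rightarrow> 's0
   \<Rightarrow> 's1 set \<Rightarrow> ('s1 \<times> 'm act \<times> 's1) set \<Rightarrow> 's1 \<Rightarrow> bool" where
  "sr_pair Ma Mb K0 T0 h0 K1 T1 h1 \<longleftrightarrow>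
     finite Ma \<and> finite Mb \<and> Ma \<inter> Mb = {}
     \<and> sr_machine Ma Mb K0 T0 h0 \<and> sr_machine Mb Ma K1 T1 h1"

definition proj :: "'m set \<Rightarrow> 'm act list \<Rightarrow> 'm list" where
  "proj M w = [msg e. e \<leftarrow> w, msg e \<in> M]"

definition Zset :: "'m set \<Rightarrow> 'm set \<Rightarrow> ('s \<times> 'm act \<times> 's) set \<Rightarrow> 's \<Rightarrow> ('m list \<times> 'm list) set" where
  "Zset Ma Mb T h = {(proj Ma w, proj Mb w) | w. path T h w h}"

definition affine ::
  "'m set \<Rightarrow> 'm set \<Rightarrow> ('s0 \<times> 'm act \<times> 's0) set \<Rightarrow> 's0 \<Rightarrow> ('s1 \<times> 'm act \<times> 's1) set \<Rightarrow> 's1 \<Rightarrow> bool" where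
  "affine Ma Mb T0 h0 T1 h1 \<longleftrightarrow> Zset Ma Mb T0 h0 = Zset Ma Mb T1 h1"

inductive reachable ::
  "('s0 \<times> 'm act \<times> 's0) set \<Rightarrow> 's0 \<Rightarrow> ('s1 \<times> 'm act \<times> 's1) set \<Rightarrow> 's1
   \<Rightarrow> ('s0 \<times> 's1) \<times> ('m list \<times> 'm list) \<Rightarrow> bool"
  for T0 h0 T1 h1 where
  init: "reachable T0 h0 T1 h1 ((h0, h1), ([], []))"
| send0: "reachable T0 h0 T1 h1 ((p0, p1), (xa, xb)) \<Longrightarrow> (p0, Snd b, q) \<in> T0 \<Longrightarrow>
          reachable T0 h0 T1 h1 ((q, p1), (xa @ [b], xb))"
| recv0: "reachable T0 h0 T1 h1 ((p0, p1), (xa, b # xb)) \<Longrightarrow> (p0, Rcv b, q) \<in> T0 \<Longrightarrow>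
          reachable T0 h0 T1 h1 ((q, p1), (xa, xb))"
| send1: "reachable T0 h0 T1 h1 ((p0, p1), (xa, xb)) \<Longrightarrow> (p1, Snd b, q) \<in> T1 \<Longrightarrow>
          reachable T0 h0 T1 h1 ((p0, q), (xa, xb @ [b]))"
| recv1: "reachable T0 h0 T1 h1 ((p0, p1), (b # xa, xb)) \<Longrightarrow> (p1, Rcv b, q) \<in> T1 \<Longrightarrow>
          reachable T0 h0 T1 h1 ((p0, q), (xa, xb))"

definition has_send_cycle :: "('s \<times> 'm act \<times> 's) set \<Rightarrow> bool" where
  "has_send_cycle T \<longleftrightarrow> (\<exists>p w. w \<noteq> [] \<and> path T p w p \<and> (\<forall>e\<in>set w. is_send e))"

definition has_receive_cycle :: "('s \<times> 'm act \<times> 's) set \<Rightarrow> bool" where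
  "has_receive_cycle T \<longleftrightarrow> (\<exists>p w. w \<noteq> [] \<and> path T p w p \<and> (\<forall>e\<in>set w. is_recv e))"

end

theory Submission
  imports Defs
begin


lemma path_Nil_iff[simp]: "path T p [] q \<longleftrightarrow> p = q"
  by (auto elim: path.cases intro: path.intros)

lemma path_Cons_iff[simp]: "path T p (e#w) r \<longleftrightarrow> (\<exists>q. (p,e,q)\<in>T \<and> path T q w r)"
  by (auto elim: path.cases intro: path.intros)

lemma path_append: "path T p (u@v) r \<longleftrightarrow> (\<exists>m. path T p u m \<and> path T m v r)"
  by (induction u arbitrary: p) auto

lemma path_in: "path T p w q \<Longrightarrow> T \<subseteq> K \<times> UNIV \<times> K \<Longrightarrow> p \<in> K \<Longrightarrow> q \<in> K"
  by (induction rule: path.induct) auto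

lemma path_labels: "path T p w q \<Longrightarrow> T \<subseteq> UNIV \<times> S \<times> UNIV \<Longrightarrow> set w \<subseteq> S"
  by (induction rule: path.induct) auto

lemma decomp_aux:
  assumes "path T p w q" "finite K" "T \<subseteq> K \<times> UNIV \<times> K" "p \<in> K" "A \<subseteq> K"
   "card K \<le> card A + length w"
   "\<exists>u0. path T s u0 p \<and> W = u0 @ w"
   "\<forall>a\<in>A. \<exists>u c. c \<noteq> [] \<and> path T s u a \<and> path T a c p \<and> W = u @ c @ w"
  shows "\<exists>u c v r. W = u @ c @ v \<and> c \<noteq> [] \<and> path T s u r \<and> path T r c r \<and> path T r v q"
  using assms
proof (induction arbitrary: A rule: path.induct)
  case (path_nil p)
  show ?case
  proof (cases "p \<in> A")
    case True
    then obtain u c where uc: "c \<noteq> []" "path T s u p" "path T p c p" "W = u @ c @ []"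
      using path_nil.prems(7) by blast
    have "path T p [] p" by simp
    then show ?thesis using uc by blast
  next
    case False
    then have "A \<subseteq> K - {p}" using path_nil.prems(4) by blast
    then have "card A \<le> card (K - {p})" using path_nil.prems(1) by (intro card_mono) auto
    also have "\<dots> < card K"
      using path_nil.prems(1,3) by (rule card_Diff1_less)
    finally show ?thesis using path_nil.prems(5) by simp
  qed
next
  case (path_cons p e q' w r)
  show ?case
  proof (cases "p \<in> A")
    case True
    then obtain u c where uc: "c \<noteq> []" "path T s u p" "path T p c p" "W = u @ c @ (e#w)"
      using path_cons.prems(7) by blast
    have "path T p (e#w) r" using path_cons.hyps by (rule path.path_cons)
    then show ?thesis using uc by blast
  next
    case False
    obtain u0 where u0: "path T s u0 p" "W = u0 @ e # w" using path_cons.prems(6) by blast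
    have fA: "finite A" using path_cons.prems(1,4) by (rule rev_finite_subset)
    have q'K: "q' \<in> K" using path_cons.prems(2) path_cons.hyps(1) by blast
    show ?thesis
    proof (rule path_cons.IH[of "insert p A"])
      show "card K \<le> card (insert p A) + length w" using False fA path_cons.prems(5) by simp
      have "path T s (u0@[e]) q'" using u0(1) path_cons.hyps(1) by (auto simp: path_append)
      then show "\<exists>u0. path T s u0 q' \<and> W = u0 @ w"
        using u0(2) by auto
      show "\<forall>a\<in>insert p A. \<exists>u c. c \<noteq> [] \<and> path T s u a \<and> path T a c q' \<and> W = u @ c @ w"
      proof
        fix a assume "a \<in> insert p A"
        then show "\<exists>u c. c \<noteq> [] \<and> path T s u a \<and> path T a c q' \<and> W = u @ c @ w"
        proof
          assume "a = p"
          moreover have "path T p [e] q'" using path_cons.hyps(1) by simp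
          ultimately show ?thesis using u0 by (intro exI[of _ u0] exI[of _ "[e]"]) auto
        next
          assume "a \<in> A"
          then obtain u c where uc: "c \<noteq> []" "path T s u a" "path T a c p" "W = u @ c @ e # w"
            using path_cons.prems(7) by blast
          have "path T a (c@[e]) q'" using uc(3) path_cons.hyps(1) by (auto simp: path_append)
          then show ?thesis using uc by auto
        qed
      qed
      show "insert p A \<subseteq> K" using path_cons.prems(3,4) by blast
      show "finite K" by (rule path_cons.prems(1))
      show "T \<subseteq> K \<times> UNIV \<times> K" by (rule path_cons.prems(2))
      show "q' \<in> K" by (rule q'K)
    qed
  qed
qed
lemma decomp:
  assumes "path T p w q" "finite K" "T \<subseteq> K \<times> UNIV \<times> K" "p \<in> K" "card K \<le> length w"
  shows "\<exists>u c v r. w = u @ c @ v \<and> c \<noteq> [] \<and> path T p u r \<and> path T r c r \<and> path T r v q"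
  using decomp_aux[OF assms(1-4), of "{}" p w] assms(5) by auto

lemma cycle_P:
  assumes "path T p w q" "finite K" "T \<subseteq> K \<times> UNIV \<times> K" "p \<in> K" "card K \<le> length w"
    "\<forall>e\<in>set w. P e"
  shows "\<exists>r c. c \<noteq> [] \<and> path T r c r \<and> (\<forall>e\<in>set c. P e)"
  using decomp[OF assms(1-5)] assms(6) by fastforce

lemma short_path:
  assumes "path T p w q" "finite K" "T \<subseteq> K \<times> UNIV \<times> K" "p \<in> K"
  shows "\<exists>w'. path T p w' q \<and> length w' < card K"
  using assms(1)
proof (induction "length w" arbitrary: w rule: less_induct)
  case less
  show ?case
  proof (cases "length w < card K")
    case True then show ?thesis using less by blast
  next
    case False
    then obtain u c v r where "w = u @ c @ v" "c \<noteq> []" "path T p u r" "path T r v q"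
      using decomp[OF less(2) assms(2-4)] by fastforce
    then show ?thesis using less(1)[of "u@v"] by (auto simp: path_append)
  qed
qed

lemma run:
  "(length (filter (\<lambda>e. \<not> P e) w) + 1) * k < length (filter P w) \<Longrightarrow>
   \<exists>u v x. w = u @ v @ x \<and> k < length v \<and> (\<forall>e\<in>set v. P e)"
proof (induction "length w" arbitrary: w rule: less_induct)
  case less
  define t where "t = takeWhile P w"
  define rs where "rs = dropWhile P w"
  have w: "w = t @ rs" by (simp add: t_def rs_def)
  have tP: "\<forall>e\<in>set t. P e" by (simp add: t_def) (meson set_takeWhileD)
  show ?case
  proof (cases "k < length t")
    case True then show ?thesis using w tP by blast
  next
    case False
    show ?thesis
    proof (cases rs)
      case Nil
      then have "filter P w = t" using w tP by simp
      then have L: "length (filter P w) = length t" by simp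
      moreover have "k \<le> (length (filter (\<lambda>e. \<not> P e) w) + 1) * k" by simp
      ultimately show ?thesis using less(2) False L by linarith
    next
      case (Cons e rs')
      have ne: "\<not> P e" using Cons unfolding rs_def
        by (metis hd_dropWhile list.distinct(1) list.sel(1))
      have f1: "filter P w = t @ filter P rs'" using w tP Cons ne by simp
      have f2: "filter (\<lambda>e. \<not> P e) w = e # filter (\<lambda>e. \<not> P e) rs'" using w tP Cons ne by simp
      let ?c = "length (filter (\<lambda>e. \<not> P e) rs')"
      have "(?c + 2) * k < length t + length (filter P rs')" using less(2) f1 f2 by simp
      then have "(?c + 1) * k < length (filter P rs')" using False by (simp add: algebra_simps)
      moreover have "length rs' < length w" using w Cons by simp
      ultimately obtain u v x where uvx: "rs' = u @ v @ x" "k < length v" "\<forall>e\<in>set v. P e"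
        using less(1)[of rs'] by blast
      have "w = (t @ e # u) @ v @ x" using w Cons uvx(1) by simp
      then show ?thesis using uvx(2,3) by blast
    qed
  qed
qed



lemma Snd_alph[simp]: "Snd b \<in> alphabet Mo Mi \<longleftrightarrow> b \<in> Mo"
  by (auto simp: alphabet_def)
lemma Rcv_alph[simp]: "Rcv b \<in> alphabet Mo Mi \<longleftrightarrow> b \<in> Mi"
  by (auto simp: alphabet_def)

lemma proj_Nil[simp]: "proj M [] = []" by (simp add: proj_def)
lemma proj_Cons[simp]: "proj M (e#w) = (if msg e \<in> M then msg e # proj M w else proj M w)"
  by (simp add: proj_def)
lemma proj_append[simp]: "proj M (u@v) = proj M u @ proj M v"
  by (simp add: proj_def)
lemma length_proj_le: "length (proj M w) \<le> length w"
  by (induction w) auto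

lemma not_recv_iff[simp]: "(\<not> is_recv e) = is_send e" by (cases e) auto
lemma not_send_iff[simp]: "(\<not> is_send e) = is_recv e" by (cases e) auto

lemma count_proj:
  "set w \<subseteq> alphabet Mo Mi \<Longrightarrow> Mo \<inter> Mi = {} \<Longrightarrow>
   length (proj Mo w) = length (filter is_send w) \<and> length (proj Mi w) = length (filter is_recv w)"
proof (induction w)
  case Nil then show ?case by simp
next
  case (Cons e w)
  then have "e \<in> alphabet Mo Mi" by simp
  then show ?case using Cons by (cases e) auto
qed

lemma sr_prefix:
  assumes "path T p u r" "path T p d s" "T \<subseteq> K \<times> alphabet Mo Mi \<times> K" "Mo \<inter> Mi = {}"
    "\<forall>p\<in>K. send_state T p \<or> receive_state T p"
    "\<forall>p e q1 q2. (p,e,q1)\<in>T \<longrightarrow> (p,e,q2)\<in>T \<longrightarrow> q1=q2"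
    "\<exists>z. proj Mo d = proj Mo u @ z" "\<exists>z. proj Mi d = proj Mi u @ z"
  shows "\<exists>d'. d = u @ d' \<and> path T r d' s"
  using assms
proof (induction arbitrary: d rule: path.induct)
  case (path_nil p)
  then show ?case by simp
next
  case (path_cons p e q w r)
  have eA: "e \<in> alphabet Mo Mi" and pK: "p \<in> K" using path_cons.hyps(1) path_cons.prems(2) by auto
  show ?case
  proof (cases d)
    case Nil
    then show ?thesis using path_cons.prems(6,7) eA
      by (cases e) auto
  next
    case (Cons e' d1)
    then obtain q2 where q2: "(p,e',q2) \<in> T" "path T q2 d1 s" using path_cons.prems(1) by auto
    have e'A: "e' \<in> alphabet Mo Mi" using q2(1) path_cons.prems(2) by auto
    have ee: "e' = e"
    proof (cases "send_state T p")
      case True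
      then obtain m m' where m: "e = Snd m" "e' = Snd m'"
        using path_cons.hyps(1) q2(1) unfolding send_state_def
        by (metis act.exhaust)
      then have "m \<in> Mo" "m' \<in> Mo" using eA e'A by auto
      then show ?thesis using path_cons.prems(6) Cons m by auto
    next
      case False
      then have "receive_state T p" using path_cons.prems(4) pK by blast
      then obtain m m' where m: "e = Rcv m" "e' = Rcv m'"
        using path_cons.hyps(1) q2(1) unfolding receive_state_def
        by (metis act.exhaust)
      then have "m \<in> Mi" "m' \<in> Mi" using eA e'A by auto
      then show ?thesis using path_cons.prems(7) Cons m by auto
    qed
    have qq: "q2 = q" using path_cons.prems(5) path_cons.hyps(1) q2(1) ee by blast
    have "\<exists>d'. d1 = w @ d' \<and> path T r d' s"
    proof (rule path_cons.IH)
      show "path T q d1 s" using q2 qq by simp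
      show "\<exists>z. proj Mo d1 = proj Mo w @ z" using path_cons.prems(6) Cons ee by (auto split: if_splits)
      show "\<exists>z. proj Mi d1 = proj Mi w @ z" using path_cons.prems(7) Cons ee by (auto split: if_splits)
    qed (use path_cons.prems in auto)
    then show ?thesis using Cons ee by auto
  qed
qed

lemma reach_inv:
  assumes "reachable T0 h0 T1 h1 c" "T0 \<subseteq> UNIV \<times> alphabet Ma Mb \<times> UNIV"
    "T1 \<subseteq> UNIV \<times> alphabet Mb Ma \<times> UNIV" "Ma \<inter> Mb = {}"
  shows "case c of ((p0,p1),(xa,xb)) \<Rightarrow> \<exists>w0 w1. path T0 h0 w0 p0 \<and> path T1 h1 w1 p1 \<and>
     proj Ma w0 = proj Ma w1 @ xa \<and> proj Mb w1 = proj Mb w0 @ xb"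
  using assms(1)
proof (induction rule: reachable.induct)
  case init
  then show ?case by (auto intro!: exI[of _ "[]"])
next
  case (send0 p0 p1 xa xb b q)
  then obtain w0 w1 where w: "path T0 h0 w0 p0" "path T1 h1 w1 p1"
     "proj Ma w0 = proj Ma w1 @ xa" "proj Mb w1 = proj Mb w0 @ xb" by auto
  have "Snd b \<in> alphabet Ma Mb" using send0.hyps(2) assms(2) by blast
  then have "b \<in> Ma" "b \<notin> Mb" using assms(4) by auto
  moreover have "path T0 h0 (w0 @ [Snd b]) q" using w(1) send0.hyps(2) by (auto simp: path_append)
  ultimately show ?case using w unfolding prod.case by (intro exI[of _ "w0 @ [Snd b]"] exI[of _ w1] conjI) auto
next
  case (recv0 p0 p1 xa b xb q)
  then obtain w0 w1 where w: "path T0 h0 w0 p0" "path T1 h1 w1 p1"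
     "proj Ma w0 = proj Ma w1 @ xa" "proj Mb w1 = proj Mb w0 @ b # xb" by auto
  have "Rcv b \<in> alphabet Ma Mb" using recv0.hyps(2) assms(2) by blast
  then have "b \<in> Mb" "b \<notin> Ma" using assms(4) by auto
  moreover have "path T0 h0 (w0 @ [Rcv b]) q" using w(1) recv0.hyps(2) by (auto simp: path_append)
  ultimately show ?case using w unfolding prod.case by (intro exI[of _ "w0 @ [Rcv b]"] exI[of _ w1] conjI) auto
next
  case (send1 p0 p1 xa xb b q)
  then obtain w0 w1 where w: "path T0 h0 w0 p0" "path T1 h1 w1 p1"
     "proj Ma w0 = proj Ma w1 @ xa" "proj Mb w1 = proj Mb w0 @ xb" by auto
  have "Snd b \<in> alphabet Mb Ma" using send1.hyps(2) assms(3) by blast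
  then have "b \<in> Mb" "b \<notin> Ma" using assms(4) by auto
  moreover have "path T1 h1 (w1 @ [Snd b]) q" using w(2) send1.hyps(2) by (auto simp: path_append)
  ultimately show ?case using w unfolding prod.case by (intro exI[of _ w0] exI[of _ "w1 @ [Snd b]"] conjI) auto
next
  case (recv1 p0 p1 b xa xb q)
  then obtain w0 w1 where w: "path T0 h0 w0 p0" "path T1 h1 w1 p1"
     "proj Ma w0 = proj Ma w1 @ b # xa" "proj Mb w1 = proj Mb w0 @ xb" by auto
  have "Rcv b \<in> alphabet Mb Ma" using recv1.hyps(2) assms(3) by blast
  then have "b \<in> Ma" "b \<notin> Mb" using assms(4) by auto
  moreover have "path T1 h1 (w1 @ [Rcv b]) q" using w(2) recv1.hyps(2) by (auto simp: path_append)
  ultimately show ?case using w unfolding prod.case by (intro exI[of _ w0] exI[of _ "w1 @ [Rcv b]"] conjI) auto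
qed

lemma path_pow: "path T r c r \<Longrightarrow> path T r (concat (replicate N c)) r"
  by (induction N) (auto simp: path_append)



theorem lemma6p2:
  fixes Ma Mb :: "'m set"
    and K0 :: "'s0 set" and T0 :: "('s0 \<times> 'm act \<times> 's0) set" and h0 :: 's0
    and K1 :: "'s1 set" and T1 :: "('s1 \<times> 'm act \<times> 's1) set" and h1 :: 's1
  assumes "sr_pair Ma Mb K0 T0 h0 K1 T1 h1"
    and "affine Ma Mb T0 h0 T1 h1"
    and "reachable T0 h0 T1 h1 ((p0, p1), (xa, []))"
    and "length xa \<ge> card K0 * (card K1 - 1) + 1"
  shows "has_receive_cycle T1 \<and> has_send_cycle T0"
proof -
  have disj: "Ma \<inter> Mb = {}" using assms(1) unfolding sr_pair_def by blast
  have fK0: "finite K0" and h0K: "h0 \<in> K0" and T0s: "T0 \<subseteq> K0 \<times> alphabet Ma Mb \<times> K0"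
    and sr0: "\<forall>p\<in>K0. send_state T0 p \<or> receive_state T0 p"
    and con0: "\<forall>p\<in>K0. \<forall>q\<in>K0. \<exists>w. path T0 p w q"
    and det0: "\<forall>p e q1 q2. (p, e, q1) \<in> T0 \<longrightarrow> (p, e, q2) \<in> T0 \<longrightarrow> q1 = q2"
    using assms(1) unfolding sr_pair_def sr_machine_def by blast+
  have fK1: "finite K1" and h1K: "h1 \<in> K1" and T1s: "T1 \<subseteq> K1 \<times> alphabet Mb Ma \<times> K1"
    and sr1: "\<forall>p\<in>K1. send_state T1 p \<or> receive_state T1 p"
    and con1: "\<forall>p\<in>K1. \<forall>q\<in>K1. \<exists>w. path T1 p w q"
    and det1: "\<forall>p e q1 q2. (p, e, q1) \<in> T1 \<longrightarrow> (p, e, q2) \<in> T1 \<longrightarrow> q1 = q2"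
    using assms(1) unfolding sr_pair_def sr_machine_def by blast+
  have disj': "Mb \<inter> Ma = {}" using disj by blast
  have Z: "Zset Ma Mb T0 h0 = Zset Ma Mb T1 h1" using assms(2) unfolding affine_def by blast
  have T0K: "T0 \<subseteq> K0 \<times> UNIV \<times> K0" and T0A: "T0 \<subseteq> UNIV \<times> alphabet Ma Mb \<times> UNIV"
    using T0s by blast+
  have T1K: "T1 \<subseteq> K1 \<times> UNIV \<times> K1" and T1A: "T1 \<subseteq> UNIV \<times> alphabet Mb Ma \<times> UNIV"
    using T1s by blast+
  obtain w0 w1 where w: "path T0 h0 w0 p0" "path T1 h1 w1 p1"
    "proj Ma w0 = proj Ma w1 @ xa" "proj Mb w1 = proj Mb w0"
    using reach_inv[OF assms(3) T0A T1A disj] by auto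
  have p0K: "p0 \<in> K0" using path_in[OF w(1) T0K h0K] .
  have p1K: "p1 \<in> K1" using path_in[OF w(2) T1K h1K] .
  obtain v00 where "path T0 p0 v00 h0" using con0 p0K h0K by blast
  then obtain v0 where v0: "path T0 p0 v0 h0" "length v0 < card K0"
    using short_path[OF _ fK0 T0K p0K] by blast
  have "path T0 h0 (w0 @ v0) h0" using w(1) v0(1) by (auto simp: path_append)
  then have "(proj Ma (w0 @ v0), proj Mb (w0 @ v0)) \<in> Zset Ma Mb T1 h1"
    using Z unfolding Zset_def by blast
  then obtain d where d: "path T1 h1 d h1" "proj Ma d = proj Ma (w0 @ v0)" "proj Mb d = proj Mb (w0 @ v0)"
    unfolding Zset_def by auto
  have dA: "proj Ma d = proj Ma w1 @ (xa @ proj Ma v0)" using d(2) w(3) by simp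
  have dB: "proj Mb d = proj Mb w1 @ proj Mb v0" using d(3) w(4) by simp
  obtain d' where d': "d = w1 @ d'" "path T1 p1 d' h1"
    using sr_prefix[OF w(2) d(1) T1s disj' sr1 det1] dA dB by blast
  have d'A: "proj Ma d' = xa @ proj Ma v0" using dA d'(1) by simp
  have d'B: "proj Mb d' = proj Mb v0" using dB d'(1) by simp
  have d'set: "set d' \<subseteq> alphabet Mb Ma" using path_labels[OF d'(2) T1A] .
  have cnt: "length (proj Mb d') = length (filter is_send d')"
     "length (proj Ma d') = length (filter is_recv d')"
    using count_proj[OF d'set disj'] by auto
  have s_le: "length (filter is_send d') + 1 \<le> card K0"
    using cnt(1) d'B length_proj_le[of Mb v0] v0(2) by simp
  have "(length (filter is_send d') + 1) * (card K1 - 1) \<le> card K0 * (card K1 - 1)"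
    using s_le by (rule mult_le_mono1)
  also have "\<dots> < length xa" using assms(4) by linarith
  also have "\<dots> \<le> length (filter is_recv d')" using cnt(2) d'A by simp
  finally have "(length (filter (\<lambda>e. \<not> is_recv e) d') + 1) * (card K1 - 1) < length (filter is_recv d')"
    by simp
  then obtain u v x where uvx: "d' = u @ v @ x" "card K1 - 1 < length v" "\<forall>e\<in>set v. is_recv e"
    using run[of is_recv d' "card K1 - 1"] by blast
  then obtain m1 m2 where m: "path T1 p1 u m1" "path T1 m1 v m2"
    using d'(2) by (auto simp: path_append)
  have m1K: "m1 \<in> K1" using path_in[OF m(1) T1K p1K] .
  have "card K1 \<le> length v" using uvx(2) by linarith
  then have RC: "has_receive_cycle T1"
    using cycle_P[OF m(2) fK1 T1K m1K _ uvx(3)] unfolding has_receive_cycle_def by blast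
  obtain r \<rho> where r: "\<rho> \<noteq> []" "path T1 r \<rho> r" "\<forall>e\<in>set \<rho>. is_recv e"
    using RC unfolding has_receive_cycle_def by blast
  have rK: "r \<in> K1" using r(1,2) T1K by (cases \<rho>) auto
  obtain P where P: "path T1 h1 P r" using con1 h1K rK by blast
  obtain Q where Q: "path T1 r Q h1" using con1 h1K rK by blast
  define m where "m = length (proj Mb (P @ Q))"
  define N where "N = (m + 1) * card K0 + 1"
  define R where "R = concat (replicate N \<rho>)"
  have R: "path T1 r R r" unfolding R_def by (rule path_pow[OF r(2)])
  have Rrecv: "\<forall>e\<in>set R. is_recv e" using r(3) unfolding R_def by auto
  have Rset: "set R \<subseteq> alphabet Mb Ma" using path_labels[OF R T1A] .
  have cR: "length (proj Mb R) = length (filter is_send R)" "length (proj Ma R) = length (filter is_recv R)"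
    using count_proj[OF Rset disj'] by auto
  have "filter is_send R = []" using Rrecv by (auto simp: filter_empty_conv)
  then have RB: "proj Mb R = []" using cR(1) by simp
  have "filter is_recv R = R" using Rrecv by simp
  then have "length (proj Ma R) = N * length \<rho>" using cR(2) unfolding R_def by (simp add: length_concat sum_list_replicate)
  then have RA: "N \<le> length (proj Ma R)" using r(1) by (simp add: Suc_le_eq)
  define c1 where "c1 = P @ R @ Q"
  have c1: "path T1 h1 c1 h1" unfolding c1_def using P R Q by (auto simp: path_append)
  then have "(proj Ma c1, proj Mb c1) \<in> Zset Ma Mb T0 h0"
    using Z unfolding Zset_def by blast
  then obtain c0 where c0: "path T0 h0 c0 h0" "proj Ma c0 = proj Ma c1" "proj Mb c0 = proj Mb c1"
    unfolding Zset_def by auto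
  have c1B: "length (proj Mb c1) = m" unfolding c1_def m_def using RB by simp
  have c1A: "N \<le> length (proj Ma c1)" unfolding c1_def using RA by simp
  have c0set: "set c0 \<subseteq> alphabet Ma Mb" using path_labels[OF c0(1) T0A] .
  have cnt0: "length (proj Ma c0) = length (filter is_send c0)"
     "length (proj Mb c0) = length (filter is_recv c0)"
    using count_proj[OF c0set disj] by auto
  have fr: "length (filter is_recv c0) = m" using cnt0(2) c0(3) c1B by simp
  have "(length (filter is_recv c0) + 1) * (card K0 - 1) \<le> (m + 1) * card K0"
    unfolding fr by (rule mult_le_mono2) simp
  also have "\<dots> < N" unfolding N_def by simp
  also have "\<dots> \<le> length (filter is_send c0)" using c1A c0(2) cnt0(1) by simp
  finally have "(length (filter (\<lambda>e. \<not> is_send e) c0) + 1) * (card K0 - 1) < length (filter is_send c0)"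
    by simp
  then obtain u v x where uvx: "c0 = u @ v @ x" "card K0 - 1 < length v" "\<forall>e\<in>set v. is_send e"
    using run[of is_send c0 "card K0 - 1"] by blast
  then obtain m1 m2 where m: "path T0 h0 u m1" "path T0 m1 v m2"
    using c0(1) by (auto simp: path_append)
  have m1K: "m1 \<in> K0" using path_in[OF m(1) T0K h0K] .
  have "card K0 \<le> length v" using uvx(2) by linarith
  then have "has_send_cycle T0"
    using cycle_P[OF m(2) fK0 T0K m1K _ uvx(3)] unfolding has_send_cycle_def by blast
  then show ?thesis using RC by blast
qed

end
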